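(* Let $n\ge1$, $a_{i0}>0$, $a_{ij}\ge 0$ and $\pi_i>0$ for $i,j=1,\ldots,n$, and assume $$\kappa:=\min_{i=1,\ldots,n}\Big(8\pi_i a_{ii}-\sum_{j=1,\,j\neq i}^n\pi_j a_{ji}\Big)>0.$$ Let $\varepsilon>0$ and let $\mu_1,\ldots,\mu_n$ satisfy $\mu_i\ge\sum_{j\ne i}(a_{ij}+a_{ji})/2$. For $u\in(0,\infty)^n$ define $$A_{ij}(u)=\delta_{ij}a_{i0}+\delta_{ij}\sum_{k=1}^na_{ik}u_k+a_{ij}u_i,\quad A_\varepsilon(u)=A(u)+\varepsilon A^0(u),\quad A^0_{ij}(u)=\delta_{ij}\frac{\mu_i}{\pi_i}u_i^2,$$ $$H_{\varepsilon,ij}(u)=\delta_{ij}\Big(\frac{\pi_i}{u_i^2}+\frac{\varepsilon}{u_i}\Big),$$ and for $\eta>0$ write $u+\eta=(u_1+\eta,\ldots,u_n+\eta)$. Then there exists $\eta_0>0$ such that for all $0<\eta\le\eta_0$, $u\in(0,\infty)^n$ and $z\in\mathbb{R}^n$, $$z^TH_\varepsilon(u+\eta)A_\varepsilon(u)z\ge\frac{\kappa}{4}\sum_{i=1}^n\frac{z_i^2}{u_i+\eta}-\eta\varepsilon C_1\sum_{i=1}^n\frac{z_i^2}{u_i+\eta}-\eta\varepsilon^2C_2\sum_{i=1}^nz_i^2,$$ where $C_1>0$ depends only on $(a_{ij})$ and $(\mu_i)$, and $C_2>0$ depends only on $(\mu_i/\pi_i)$.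
   Context: $\delta_{ij}$ is the Kronecker symbol. *)

theory Defs
  imports Complex_Main
begin

text \<open>Indices i,j range over a finite type 'n (so n = CARD('n) >= 1).
  Vectors in R^n are functions 'n => real, n x n matrices are 'n => 'n => real.\<close>

definition kron :: "'n \<Rightarrow> 'n \<Rightarrow> real" where
  "kron i j = (if i = j then 1 else 0)"

definition Amat :: "('n \<Rightarrow> real) \<Rightarrow> ('n \<Rightarrow> 'n \<Rightarrow> real) \<Rightarrow> ('n::finite \<Rightarrow> real) \<Rightarrow> 'n \<Rightarrow> 'n \<Rightarrow> real" where
  "Amat a0 a u i j = kron i j * a0 i + kron i j * (\<Sum>k\<in>UNIV. a i k * u k) + a i j * u i"

definition A0mat :: "('n \<Rightarrow> real) \<Rightarrow> ('n \<Rightarrow> real) \<Rightarrow> ('n \<Rightarrow> real) \<Rightarrow> 'n \<Rightarrow> 'n \<Rightarrow> real" where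
  "A0mat \<mu> \<pi> u i j = kron i j * (\<mu> i / \<pi> i) * (u i)\<^sup>2"

definition Aeps :: "real \<Rightarrow> ('n \<Rightarrow> real) \<Rightarrow> ('n \<Rightarrow> 'n \<Rightarrow> real) \<Rightarrow> ('n \<Rightarrow> real) \<Rightarrow> ('n \<Rightarrow> real)
     \<Rightarrow> ('n::finite \<Rightarrow> real) \<Rightarrow> 'n \<Rightarrow> 'n \<Rightarrow> real" where
  "Aeps \<epsilon> a0 a \<mu> \<pi> u i j = Amat a0 a u i j + \<epsilon> * A0mat \<mu> \<pi> u i j"

definition Heps :: "real \<Rightarrow> ('n \<Rightarrow> real) \<Rightarrow> ('n \<Rightarrow> real) \<Rightarrow> 'n \<Rightarrow> 'n \<Rightarrow> real" where
  "Heps \<epsilon> \<pi> u i j = kron i j * (\<pi> i / (u i)\<^sup>2 + \<epsilon> / u i)"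

definition quad2 :: "('n::finite \<Rightarrow> 'n \<Rightarrow> real) \<Rightarrow> ('n \<Rightarrow> 'n \<Rightarrow> real) \<Rightarrow> ('n \<Rightarrow> real) \<Rightarrow> real" where
  "quad2 M N z = (\<Sum>i\<in>UNIV. \<Sum>j\<in>UNIV. z i * (\<Sum>k\<in>UNIV. M i k * N k j) * z j)"

definition kappa :: "('n::finite \<Rightarrow> 'n \<Rightarrow> real) \<Rightarrow> ('n \<Rightarrow> real) \<Rightarrow> real" where
  "kappa a \<pi> = Min (range (\<lambda>i. 8 * \<pi> i * a i i - (\<Sum>j\<in>UNIV - {i}. \<pi> j * a j i)))"

end

theory Submission
  imports Defs
begin

lemma pair_bound:
  fixes p a ui uj \<eta> \<epsilon> zi zj :: real
  assumes p: "p > 0" and a: "a \<ge> 0" and ui: "ui > 0" and uj: "uj > 0" and e: "\<eta> > 0" and eps: "\<epsilon> > 0"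
  shows "(p/(ui+\<eta>)^2 + \<epsilon>/(ui+\<eta>)) * (a*ui) * zi * zj \<ge>
     - (p*a*(uj+\<eta>)*zi^2/(ui+\<eta>)^2) - \<epsilon>*a*ui^2*zi^2/(2*(ui+\<eta>)^2)
     + (- (p*a*zj^2/(4*(uj+\<eta>))) - \<epsilon>*a*uj^2*zj^2/(2*(uj+\<eta>)^2) - \<epsilon>*a*\<eta>*zj^2/(uj+\<eta>))"
proof -
  define vi where "vi = ui + \<eta>"
  define vj where "vj = uj + \<eta>"
  have vi: "vi > 0" and vj: "vj > 0" using ui uj e by (auto simp: vi_def vj_def)
  define ti where "ti = ui / vi"
  define tj where "tj = uj / vj"
  have ti0: "0 \<le> ti" and ti1: "ti \<le> 1" using ui e vi by (auto simp: ti_def vi_def)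
  have tj0: "0 \<le> tj" and tj1: "tj \<le> 1" using uj e vj by (auto simp: tj_def vj_def)
  have tjeta: "1 - tj = \<eta> / vj" using vj by (simp add: tj_def vj_def field_simps)
  define X where "X = vj * zi"
  define Y where "Y = vi * zj"
  have amgm: "\<bar>X*Y\<bar> \<le> X^2 + Y^2/4"
  proof -
    have "0 \<le> (\<bar>X\<bar> - \<bar>Y\<bar>/2)^2" by simp
    then show ?thesis by (simp add: power2_eq_square abs_mult algebra_simps)
  qed
  have "ti * (X*Y) \<ge> - (X^2 + Y^2/4)"
  proof -
    have "ti * (- \<bar>X*Y\<bar>) \<le> ti * (X*Y)"
      by (rule mult_left_mono[OF _ ti0]) simp
    then have "ti * (X*Y) \<ge> - (ti * \<bar>X*Y\<bar>)" by simp
    moreover have "ti * \<bar>X*Y\<bar> \<le> \<bar>X*Y\<bar>" by (rule mult_left_le_one_le) (use ti0 ti1 in auto)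
    ultimately show ?thesis using amgm by linarith
  qed
  then have "ti * (X*Y) / (vi^2*vj) \<ge> - (X^2 + Y^2/4) / (vi^2*vj)"
    by (rule divide_right_mono) (use vi vj in simp)
  then have "ti * (X*Y) / (vi^2*vj) \<ge> - ((X^2 + Y^2/4) / (vi^2*vj))"
    by (simp only: minus_divide_left)
  moreover have "ti * (X*Y) / (vi^2*vj) = ui*zi*zj/vi^2"
    using vi vj by (simp add: ti_def X_def Y_def field_simps power2_eq_square)
  moreover have "(X^2 + Y^2/4) / (vi^2*vj) = vj*zi^2/vi^2 + zj^2/(4*vj)"
    using vi vj by (simp add: X_def Y_def field_simps power2_eq_square)
  ultimately have A: "ui*zi*zj/vi^2 \<ge> -(vj*zi^2/vi^2 + zj^2/(4*vj))" by linarith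
  have B1: "2*(ti*zi*zj) \<ge> -((ti*zi)^2 + zj^2)"
  proof -
    have "0 \<le> (ti*zi + zj)^2" by simp
    then show ?thesis by (simp add: power2_eq_square algebra_simps)
  qed
  have B2: "zj^2 \<le> (tj*zj)^2 + 2*((1-tj)*zj^2)"
  proof -
    have "0 \<le> (1-tj)^2 * zj^2" by simp
    then show ?thesis by (simp add: power2_eq_square algebra_simps)
  qed
  have B: "ui*zi*zj/vi \<ge> -(ui^2*zi^2/(2*vi^2) + uj^2*zj^2/(2*vj^2) + \<eta>*zj^2/vj)"
  proof -
    have e1: "ui*zi*zj/vi = ti*zi*zj" by (simp add: ti_def)
    have e2: "ui^2*zi^2/(2*vi^2) = (ti*zi)^2/2" by (simp add: ti_def power_divide power_mult_distrib)
    have e3: "uj^2*zj^2/(2*vj^2) = (tj*zj)^2/2" by (simp add: tj_def power_divide power_mult_distrib)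
    have e4: "\<eta>*zj^2/vj = (1-tj)*zj^2" by (simp add: tjeta)
    show ?thesis unfolding e1 e2 e3 e4 using B1 B2 by linarith
  qed
  have pa: "p*a \<ge> 0" and ea: "\<epsilon>*a \<ge> 0" using p a eps by auto
  have A': "p*a*(ui*zi*zj/vi^2) \<ge> p*a*(-(vj*zi^2/vi^2 + zj^2/(4*vj)))"
    using mult_left_mono[OF A pa] .
  have B': "\<epsilon>*a*(ui*zi*zj/vi) \<ge> \<epsilon>*a*(-(ui^2*zi^2/(2*vi^2) + uj^2*zj^2/(2*vj^2) + \<eta>*zj^2/vj))"
    using mult_left_mono[OF B ea] .
  have L: "(p/(ui+\<eta>)^2 + \<epsilon>/(ui+\<eta>)) * (a*ui) * zi * zj = p*a*(ui*zi*zj/vi^2) + \<epsilon>*a*(ui*zi*zj/vi)"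
    by (simp add: vi_def field_simps)
  show ?thesis unfolding L using A' B' by (simp add: vi_def vj_def algebra_simps)
qed


lemma diag_eq:
  fixes p s v \<eta> \<epsilon> az aii Bo Bs Bt Pt \<mu> \<kappa> Cc :: real
  assumes v: "v \<noteq> 0" and p: "p \<noteq> 0"
  shows "(p/v^2 + \<epsilon>/v) * s * (az + (aii*(v-\<eta>) + Bo) + \<epsilon>*(\<mu>/p)*(v-\<eta>)^2 + aii*(v-\<eta>))
     - (p*s/v^2*(Bo + \<eta>*Bs) + \<epsilon>*(v-\<eta>)^2*s/(2*v^2)*Bs)
     - (s/(4*v)*Pt + \<epsilon>*(v-\<eta>)^2*s/(2*v^2)*Bt + \<epsilon>*\<eta>*s/v*Bt)
     - (\<kappa>/4*(s/v) - \<eta>*\<epsilon>*Cc*(s/v)) = 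
    \<epsilon>/v*s*(az + 2*aii*(v-\<eta>) + Bo + \<epsilon>*\<mu>*(v-\<eta>)^2/p) +
    p*s/v^2*(az - \<eta>*Bs - 2*aii*\<eta>) + s/v*(2*aii*p - Pt/4 - \<kappa>/4) + 
    \<epsilon>*(v-\<eta>)^2*s/v^2*(\<mu> - (Bs+Bt)/2) + \<epsilon>*\<eta>*s/v*(Cc - Bt)"
  using v p by (simp add: field_simps power2_eq_square) (simp add: algebra_simps)?

lemma diag_eq2:
  fixes p s u \<eta> \<epsilon> az aii Bo Bs Bt Pt \<mu> \<kappa> Cc :: real
  assumes v: "u + \<eta> \<noteq> 0" and p: "p \<noteq> 0"
  shows "(p/(u+\<eta>)^2 + \<epsilon>/(u+\<eta>)) * s * (az + (aii*u + Bo) + \<epsilon>*(\<mu>/p)*u^2 + aii*u)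
     - (p*s/(u+\<eta>)^2*(Bo + \<eta>*Bs) + \<epsilon>*u^2*s/(2*(u+\<eta>)^2)*Bs)
     - (s/(4*(u+\<eta>))*Pt + \<epsilon>*u^2*s/(2*(u+\<eta>)^2)*Bt + \<epsilon>*\<eta>*s/(u+\<eta>)*Bt)
     - (\<kappa>/4*(s/(u+\<eta>)) - \<eta>*\<epsilon>*Cc*(s/(u+\<eta>))) = 
    \<epsilon>/(u+\<eta>)*s*(az + 2*aii*u + Bo + \<epsilon>*\<mu>*u^2/p) +
    p*s/(u+\<eta>)^2*(az - \<eta>*Bs - 2*aii*\<eta>) + s/(u+\<eta>)*(2*aii*p - Pt/4 - \<kappa>/4) + 
    \<epsilon>*u^2*s/(u+\<eta>)^2*(\<mu> - (Bs+Bt)/2) + \<epsilon>*\<eta>*s/(u+\<eta>)*(Cc - Bt)"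
proof -
  define v where "v = u + \<eta>"
  have u: "u = v - \<eta>" by (simp add: v_def)
  have v0: "v \<noteq> 0" using v by (simp add: v_def)
  show ?thesis unfolding v_def[symmetric] unfolding u by (rule diag_eq[OF v0 p])
qed

lemma diag_bound:
  fixes p s u \<eta> \<epsilon> a0 aii B1 Bs Bt Pt \<mu> \<kappa> C1 :: real
  assumes p: "p>0" and s: "s\<ge>0" and u: "u>0" and e: "\<eta>>0" and eps: "\<epsilon>>0" and a0: "a0>0" and aii: "aii\<ge>0"
    and B1: "B1\<ge>0" and Bs: "Bs\<ge>0" and Bt: "Bt\<ge>0" and Pt: "Pt\<ge>0" and mu: "\<mu> \<ge> (Bs+Bt)/2"
    and k: "\<kappa> \<le> 8*p*aii - Pt" and et: "\<eta>*(Bs+2*aii) \<le> a0" and C: "Bt \<le> C1"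
  shows "(p/(u+\<eta>)^2 + \<epsilon>/(u+\<eta>)) * s * (a0 + (aii*u + B1) + \<epsilon>*(\<mu>/p)*u^2 + aii*u)
     - (p*s/(u+\<eta>)^2*(B1 + \<eta>*Bs) + \<epsilon>*u^2*s/(2*(u+\<eta>)^2)*Bs)
     - (s/(4*(u+\<eta>))*Pt + \<epsilon>*u^2*s/(2*(u+\<eta>)^2)*Bt + \<epsilon>*\<eta>*s/(u+\<eta>)*Bt)
     \<ge> \<kappa>/4*(s/(u+\<eta>)) - \<eta>*\<epsilon>*C1*(s/(u+\<eta>))"
proof -
  define v where "v = u + \<eta>"
  have v: "v > 0" using u e by (simp add: v_def)
  have uv: "u = v - \<eta>" by (simp add: v_def)
  have mu0: "\<mu> \<ge> 0" using mu Bs Bt by auto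
  define Ta where "Ta = \<epsilon>/(u+\<eta>)*s*(a0 + 2*aii*u + B1 + \<epsilon>*\<mu>*u^2/p)"
  define Tb where "Tb = p*s/(u+\<eta>)^2*(a0 - \<eta>*Bs - 2*aii*\<eta>)"
  define Tc where "Tc = s/(u+\<eta>)*(2*aii*p - Pt/4 - \<kappa>/4)"
  define Td where "Td = \<epsilon>*u^2*s/(u+\<eta>)^2*(\<mu> - (Bs+Bt)/2)"
  define Te where "Te = \<epsilon>*\<eta>*s/(u+\<eta>)*(C1 - Bt)"
  have v': "u + \<eta> > 0" using v by (simp add: v_def)
  have "Ta \<ge> 0" unfolding Ta_def
  proof (intro mult_nonneg_nonneg)
    show "0 \<le> \<epsilon>/(u+\<eta>)" using eps v' by simp
    show "0 \<le> s" by (rule s)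
    have "0 \<le> \<epsilon>*\<mu>*u^2/p" using eps mu0 p by simp
    moreover have "0 \<le> aii*u" using aii u by simp
    ultimately show "0 \<le> a0 + 2*aii*u + B1 + \<epsilon>*\<mu>*u^2/p" using a0 B1 by linarith
  qed
  moreover have "Tb \<ge> 0" unfolding Tb_def
  proof (intro mult_nonneg_nonneg)
    show "0 \<le> p*s/(u+\<eta>)^2" using p s v' by simp
    show "0 \<le> a0 - \<eta>*Bs - 2*aii*\<eta>" using et by (simp add: algebra_simps)
  qed
  moreover have "Tc \<ge> 0" unfolding Tc_def
  proof (intro mult_nonneg_nonneg)
    show "0 \<le> s/(u+\<eta>)" using s v' by simp
    have "8*p*aii = 4*(2*aii*p)" by simp
    then show "0 \<le> 2*aii*p - Pt/4 - \<kappa>/4" using k by linarith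
  qed
  moreover have "Td \<ge> 0" unfolding Td_def
  proof (intro mult_nonneg_nonneg)
    show "0 \<le> \<epsilon>*u^2*s/(u+\<eta>)^2" using s eps v' by simp
    show "0 \<le> \<mu> - (Bs+Bt)/2" using mu by linarith
  qed
  moreover have "Te \<ge> 0" unfolding Te_def
  proof (intro mult_nonneg_nonneg)
    show "0 \<le> \<epsilon>*\<eta>*s/(u+\<eta>)" using s eps e v' by simp
    show "0 \<le> C1 - Bt" using C by linarith
  qed
  ultimately have nn: "0 \<le> Ta + Tb + Tc + Td + Te" by linarith
  have eq: "(p/(u+\<eta>)^2 + \<epsilon>/(u+\<eta>)) * s * (a0 + (aii*u + B1) + \<epsilon>*(\<mu>/p)*u^2 + aii*u)
     - (p*s/(u+\<eta>)^2*(B1 + \<eta>*Bs) + \<epsilon>*u^2*s/(2*(u+\<eta>)^2)*Bs)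
     - (s/(4*(u+\<eta>))*Pt + \<epsilon>*u^2*s/(2*(u+\<eta>)^2)*Bt + \<epsilon>*\<eta>*s/(u+\<eta>)*Bt)
     - (\<kappa>/4*(s/(u+\<eta>)) - \<eta>*\<epsilon>*C1*(s/(u+\<eta>))) = Ta + Tb + Tc + Td + Te"
    unfolding Ta_def Tb_def Tc_def Td_def Te_def
    by (rule diag_eq2) (use v p in \<open>auto simp: v_def\<close>)
  have "0 \<le> (p/(u+\<eta>)^2 + \<epsilon>/(u+\<eta>)) * s * (a0 + (aii*u + B1) + \<epsilon>*(\<mu>/p)*u^2 + aii*u)
     - (p*s/(u+\<eta>)^2*(B1 + \<eta>*Bs) + \<epsilon>*u^2*s/(2*(u+\<eta>)^2)*Bs)
     - (s/(4*(u+\<eta>))*Pt + \<epsilon>*u^2*s/(2*(u+\<eta>)^2)*Bt + \<epsilon>*\<eta>*s/(u+\<eta>)*Bt)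
     - (\<kappa>/4*(s/(u+\<eta>)) - \<eta>*\<epsilon>*C1*(s/(u+\<eta>)))" unfolding eq by (rule nn)
  then show ?thesis by (simp only: diff_ge_0_iff_ge)
qed


lemma sum_off_if:
  fixes G :: "'n::finite \<Rightarrow> real"
  shows "(\<Sum>j\<in>UNIV-{i}. G j) = (\<Sum>j\<in>UNIV. if j = i then 0 else G j)"
proof -
  have "(\<Sum>j\<in>UNIV. if j = i then 0 else G j) = (\<Sum>j\<in>UNIV-{i}. if j = i then 0 else G j)"
    by (rule sum.mono_neutral_right) auto
  also have "\<dots> = (\<Sum>j\<in>UNIV-{i}. G j)" by (rule sum.cong) auto
  finally show ?thesis by simp
qed

lemma swap_off:
  fixes F :: "'n::finite \<Rightarrow> 'n \<Rightarrow> real"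
  shows "(\<Sum>i\<in>UNIV. \<Sum>j\<in>UNIV-{i}. F i j) = (\<Sum>i\<in>UNIV. \<Sum>j\<in>UNIV-{i}. F j i)"
proof -
  have "(\<Sum>i\<in>UNIV. \<Sum>j\<in>UNIV-{i}. F i j) = (\<Sum>i\<in>UNIV. \<Sum>j\<in>UNIV. if j = i then 0 else F i j)"
    by (simp only: sum_off_if)
  also have "\<dots> = (\<Sum>j\<in>UNIV. \<Sum>i\<in>UNIV. if j = i then 0 else F i j)" by (rule sum.swap)
  also have "\<dots> = (\<Sum>i\<in>UNIV. \<Sum>j\<in>UNIV. if j = i then 0 else F j i)"
    by (intro sum.cong refl) auto
  also have "\<dots> = (\<Sum>i\<in>UNIV. \<Sum>j\<in>UNIV-{i}. F j i)"
    by (simp only: sum_off_if)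
  finally show ?thesis .
qed

lemma sum_lin:
  fixes x y :: "'n \<Rightarrow> real"
  shows "(\<Sum>j\<in>S. \<alpha> * x j + \<beta> * y j) = \<alpha> * sum x S + \<beta> * sum y S"
  by (simp add: sum.distrib sum_distrib_left)

lemma sum_kron:
  fixes N :: "'n::finite \<Rightarrow> real"
  shows "(\<Sum>k\<in>UNIV. kron i k * c * N k) = c * N i"
proof -
  have "(\<Sum>k\<in>UNIV. kron i k * c * N k) = (\<Sum>k\<in>UNIV. if i = k then c * N k else 0)"
    by (rule sum.cong) (auto simp: kron_def)
  also have "\<dots> = c * N i" by (simp add: sum.delta)
  finally show ?thesis .
qed

theorem lemma11:
  "\<exists>(C1 :: ('n::finite \<Rightarrow> 'n \<Rightarrow> real) \<Rightarrow> ('n \<Rightarrow> real) \<Rightarrow> real)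
     (C2 :: ('n \<Rightarrow> real) \<Rightarrow> real).
   \<forall>(a0 :: 'n \<Rightarrow> real) (a :: 'n \<Rightarrow> 'n \<Rightarrow> real) (\<pi> :: 'n \<Rightarrow> real) (\<mu> :: 'n \<Rightarrow> real) (\<epsilon> :: real).
     (\<forall>i. a0 i > 0) \<and> (\<forall>i j. a i j \<ge> 0) \<and> (\<forall>i. \<pi> i > 0) \<and> kappa a \<pi> > 0 \<and> \<epsilon> > 0 \<and>
     (\<forall>i. \<mu> i \<ge> (\<Sum>j\<in>UNIV - {i}. (a i j + a j i) / 2))
     \<longrightarrow> C1 a \<mu> > 0 \<and> C2 (\<lambda>i. \<mu> i / \<pi> i) > 0 \<and>
         (\<exists>\<eta>0 > 0. \<forall>\<eta> (u :: 'n \<Rightarrow> real) (z :: 'n \<Rightarrow> real).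
            0 < \<eta> \<and> \<eta> \<le> \<eta>0 \<and> (\<forall>i. u i > 0) \<longrightarrow>
            quad2 (Heps \<epsilon> \<pi> (\<lambda>i. u i + \<eta>)) (Aeps \<epsilon> a0 a \<mu> \<pi> u) z
            \<ge> kappa a \<pi> / 4 * (\<Sum>i\<in>UNIV. (z i)\<^sup>2 / (u i + \<eta>))
              - \<eta> * \<epsilon> * C1 a \<mu> * (\<Sum>i\<in>UNIV. (z i)\<^sup>2 / (u i + \<eta>))
              - \<eta> * \<epsilon>\<^sup>2 * C2 (\<lambda>i. \<mu> i / \<pi> i) * (\<Sum>i\<in>UNIV. (z i)\<^sup>2))"
proof -
  define CC1 :: "('n \<Rightarrow> 'n \<Rightarrow> real) \<Rightarrow> ('n \<Rightarrow> real) \<Rightarrow> real"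
    where "CC1 = (\<lambda>a \<mu>. 1 + (\<Sum>i\<in>UNIV. \<Sum>j\<in>UNIV. a i j))"
  define CC2 :: "('n \<Rightarrow> real) \<Rightarrow> real" where "CC2 = (\<lambda>_. 1)"
  show ?thesis
  proof (intro exI[of _ CC1] exI[of _ CC2] allI impI)
    fix a0 :: "'n \<Rightarrow> real" and a :: "'n \<Rightarrow> 'n \<Rightarrow> real" and \<pi> \<mu> :: "'n \<Rightarrow> real" and \<epsilon> :: real
    assume H: "(\<forall>i. a0 i > 0) \<and> (\<forall>i j. a i j \<ge> 0) \<and> (\<forall>i. \<pi> i > 0) \<and> kappa a \<pi> > 0 \<and> \<epsilon> > 0 \<and>
     (\<forall>i. \<mu> i \<ge> (\<Sum>j\<in>UNIV - {i}. (a i j + a j i) / 2))"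
    have a0p: "\<And>i. a0 i > 0" using H by blast
    have anz: "\<And>i j. a i j \<ge> 0" using H by blast
    have pip: "\<And>i. \<pi> i > 0" using H by blast
    have eps: "\<epsilon> > 0" using H by blast
    have muH: "\<And>i. \<mu> i \<ge> (\<Sum>j\<in>UNIV - {i}. (a i j + a j i) / 2)" using H by blast
    define \<kappa> where "\<kappa> = kappa a \<pi>"
    define C where "C = CC1 a \<mu>"
    define Bs where "Bs = (\<lambda>i. \<Sum>j\<in>UNIV-{i}. a i j)"
    define Bt where "Bt = (\<lambda>i. \<Sum>j\<in>UNIV-{i}. a j i)"
    define Pt where "Pt = (\<lambda>i. \<Sum>j\<in>UNIV-{i}. \<pi> j * a j i)"
    have rowsum: "\<And>i. (\<Sum>j\<in>UNIV. a i j) = a i i + Bs i"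
      unfolding Bs_def by (rule sum.remove) auto
    have Bs0: "\<And>i. Bs i \<ge> 0" unfolding Bs_def using anz by (simp add: sum_nonneg)
    have Bt0: "\<And>i. Bt i \<ge> 0" unfolding Bt_def using anz by (simp add: sum_nonneg)
    have Pt0: "\<And>i. Pt i \<ge> 0" unfolding Pt_def using anz pip
      by (intro sum_nonneg mult_nonneg_nonneg) (auto simp: less_imp_le)
    have kmin: "\<And>i. \<kappa> \<le> 8 * \<pi> i * a i i - Pt i"
      unfolding \<kappa>_def kappa_def Pt_def by (rule Min_le) auto
    have mu: "\<And>i. \<mu> i \<ge> (Bs i + Bt i)/2"
    proof -
      fix i
      have "(\<Sum>j\<in>UNIV - {i}. (a i j + a j i) / 2) = (Bs i + Bt i)/2"
        unfolding Bs_def Bt_def by (simp only: sum_divide_distrib[symmetric] sum.distrib)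
      then show "\<mu> i \<ge> (Bs i + Bt i)/2" using muH[of i] by simp
    qed
    have C1pos: "C > 0"
    proof -
      have "(\<Sum>i\<in>UNIV. \<Sum>j\<in>UNIV. a i j) \<ge> 0" using anz by (simp add: sum_nonneg)
      then show ?thesis unfolding C_def CC1_def by simp
    qed
    have BtC: "\<And>i. Bt i \<le> C"
    proof -
      fix i
      have "Bt i \<le> (\<Sum>j\<in>UNIV. a j i)" unfolding Bt_def
        by (rule sum_mono2) (auto simp: anz)
      also have "\<dots> \<le> (\<Sum>j\<in>UNIV. \<Sum>k\<in>UNIV. a j k)"
        by (rule sum_mono, rule member_le_sum) (auto simp: anz)
      finally show "Bt i \<le> C" unfolding C_def CC1_def by simp
    qed
    define \<eta>0 where "\<eta>0 = Min (range (\<lambda>i. a0 i / (1 + (\<Sum>j\<in>UNIV. a i j) + a i i)))"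
    have den: "\<And>i. 1 + (\<Sum>j\<in>UNIV. a i j) + a i i > 0"
    proof -
      fix i
      have "(\<Sum>j\<in>UNIV. a i j) \<ge> 0" using anz by (simp add: sum_nonneg)
      then show "1 + (\<Sum>j\<in>UNIV. a i j) + a i i > 0" using anz[of i i] by linarith
    qed
    have eta0: "\<eta>0 > 0" unfolding \<eta>0_def
      using a0p den by (subst Min_gr_iff) auto
    show "CC1 a \<mu> > 0 \<and> CC2 (\<lambda>i. \<mu> i / \<pi> i) > 0 \<and>
         (\<exists>\<eta>0 > 0. \<forall>\<eta> (u :: 'n \<Rightarrow> real) (z :: 'n \<Rightarrow> real).
            0 < \<eta> \<and> \<eta> \<le> \<eta>0 \<and> (\<forall>i. u i > 0) \<longrightarrow>
            quad2 (Heps \<epsilon> \<pi> (\<lambda>i. u i + \<eta>)) (Aeps \<epsilon> a0 a \<mu> \<pi> u) z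
            \<ge> kappa a \<pi> / 4 * (\<Sum>i\<in>UNIV. (z i)\<^sup>2 / (u i + \<eta>))
              - \<eta> * \<epsilon> * CC1 a \<mu> * (\<Sum>i\<in>UNIV. (z i)\<^sup>2 / (u i + \<eta>))
              - \<eta> * \<epsilon>\<^sup>2 * CC2 (\<lambda>i. \<mu> i / \<pi> i) * (\<Sum>i\<in>UNIV. (z i)\<^sup>2))"
    proof (intro conjI exI[of _ \<eta>0] allI impI)
      show "CC1 a \<mu> > 0" using C1pos by (simp add: C_def)
      show "CC2 (\<lambda>i. \<mu> i / \<pi> i) > 0" by (simp add: CC2_def)
      show "\<eta>0 > 0" by (rule eta0)
      fix \<eta> :: real and u z :: "'n \<Rightarrow> real"
      assume A: "0 < \<eta> \<and> \<eta> \<le> \<eta>0 \<and> (\<forall>i. u i > 0)"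
      have e: "\<eta> > 0" and ee: "\<eta> \<le> \<eta>0" and up: "\<And>i. u i > 0" using A by auto
      have et: "\<And>i. \<eta> * (Bs i + 2 * a i i) \<le> a0 i"
      proof -
        fix i
        have "\<eta> \<le> a0 i / (1 + (\<Sum>j\<in>UNIV. a i j) + a i i)"
          using ee unfolding \<eta>0_def by (meson Min_le UNIV_I finite order_trans rangeI finite_imageI)
        then have "\<eta> * (1 + (\<Sum>j\<in>UNIV. a i j) + a i i) \<le> a0 i"
          using den[of i] by (simp add: pos_le_divide_eq)
        moreover have "\<eta> * (Bs i + 2 * a i i) \<le> \<eta> * (1 + (\<Sum>j\<in>UNIV. a i j) + a i i)"
          using e by (intro mult_left_mono) (auto simp: rowsum)
        ultimately show "\<eta> * (Bs i + 2 * a i i) \<le> a0 i" by linarith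
      qed
      define B1 where "B1 = (\<lambda>i. \<Sum>j\<in>UNIV-{i}. a i j * u j)"
      have B10: "\<And>i. B1 i \<ge> 0" unfolding B1_def using anz up
        by (intro sum_nonneg mult_nonneg_nonneg) (auto simp: less_imp_le)
      have Ssum: "\<And>i. (\<Sum>k\<in>UNIV. a i k * u k) = a i i * u i + B1 i"
        unfolding B1_def by (rule sum.remove) auto
      define h where "h = (\<lambda>i. \<pi> i/(u i+\<eta>)^2 + \<epsilon>/(u i+\<eta>))"
      define D where "D = (\<lambda>i. (\<pi> i/(u i+\<eta>)^2 + \<epsilon>/(u i+\<eta>)) * (z i)^2 *
          (a0 i + (a i i * u i + B1 i) + \<epsilon>*(\<mu> i/\<pi> i)*(u i)^2 + a i i * u i))"
      define Li where "Li = (\<lambda>i j. - (\<pi> i*a i j*(u j+\<eta>)*(z i)^2/(u i+\<eta>)^2) - \<epsilon>*a i j*(u i)^2*(z i)^2/(2*(u i+\<eta>)^2))"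
      define Lj where "Lj = (\<lambda>i j. - (\<pi> i*a i j*(z j)^2/(4*(u j+\<eta>))) - \<epsilon>*a i j*(u j)^2*(z j)^2/(2*(u j+\<eta>)^2) - \<epsilon>*a i j*\<eta>*(z j)^2/(u j+\<eta>))"
      define L where "L = (\<lambda>i j. if i = j then D i else Li i j + Lj i j)"
      have Q: "quad2 (Heps \<epsilon> \<pi> (\<lambda>i. u i + \<eta>)) (Aeps \<epsilon> a0 a \<mu> \<pi> u) z
          = (\<Sum>i\<in>UNIV. \<Sum>j\<in>UNIV. z i * (h i * Aeps \<epsilon> a0 a \<mu> \<pi> u i j) * z j)"
        unfolding quad2_def Heps_def h_def by (simp add: sum_kron)
      have GL: "\<And>i j. z i * (h i * Aeps \<epsilon> a0 a \<mu> \<pi> u i j) * z j \<ge> L i j"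
      proof -
        fix i j
        show "z i * (h i * Aeps \<epsilon> a0 a \<mu> \<pi> u i j) * z j \<ge> L i j"
        proof (cases "i = j")
          case True
          have "Aeps \<epsilon> a0 a \<mu> \<pi> u i i = a0 i + (a i i * u i + B1 i) + \<epsilon>*(\<mu> i/\<pi> i)*(u i)^2 + a i i * u i"
            unfolding Aeps_def Amat_def A0mat_def kron_def by (simp add: Ssum)
          then have "z i * (h i * Aeps \<epsilon> a0 a \<mu> \<pi> u i i) * z i = D i"
            unfolding D_def h_def by (simp add: power2_eq_square)
          then show ?thesis using True by (simp add: L_def)
        next
          case False
          have "Aeps \<epsilon> a0 a \<mu> \<pi> u i j = a i j * u i"
            unfolding Aeps_def Amat_def A0mat_def kron_def using False by simp
          then have "z i * (h i * Aeps \<epsilon> a0 a \<mu> \<pi> u i j) * z j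
              = (\<pi> i/(u i+\<eta>)^2 + \<epsilon>/(u i+\<eta>)) * (a i j * u i) * z i * z j"
            unfolding h_def by (simp add: mult_ac)
          also have "\<dots> \<ge> Li i j + Lj i j"
            unfolding Li_def Lj_def
            by (rule pair_bound[OF pip anz up up e eps])
          finally show ?thesis using False by (simp add: L_def)
        qed
      qed
      have S1: "quad2 (Heps \<epsilon> \<pi> (\<lambda>i. u i + \<eta>)) (Aeps \<epsilon> a0 a \<mu> \<pi> u) z \<ge> (\<Sum>i\<in>UNIV. \<Sum>j\<in>UNIV. L i j)"
        unfolding Q by (intro sum_mono GL)
      have rowL: "\<And>i. (\<Sum>j\<in>UNIV. L i j) = D i + ((\<Sum>j\<in>UNIV-{i}. Li i j) + (\<Sum>j\<in>UNIV-{i}. Lj i j))"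
      proof -
        fix i
        have "(\<Sum>j\<in>UNIV. L i j) = L i i + (\<Sum>j\<in>UNIV-{i}. L i j)" by (rule sum.remove) auto
        also have "(\<Sum>j\<in>UNIV-{i}. L i j) = (\<Sum>j\<in>UNIV-{i}. Li i j + Lj i j)"
          by (rule sum.cong) (auto simp: L_def)
        finally show "(\<Sum>j\<in>UNIV. L i j) = D i + ((\<Sum>j\<in>UNIV-{i}. Li i j) + (\<Sum>j\<in>UNIV-{i}. Lj i j))"
          by (simp add: L_def sum.distrib)
      qed
      have S2: "(\<Sum>i\<in>UNIV. \<Sum>j\<in>UNIV. L i j) = (\<Sum>i\<in>UNIV. D i + (\<Sum>j\<in>UNIV-{i}. Li i j) + (\<Sum>j\<in>UNIV-{i}. Lj j i))"
      proof -
        have "(\<Sum>i\<in>UNIV. \<Sum>j\<in>UNIV. L i j) = (\<Sum>i\<in>UNIV. D i + (\<Sum>j\<in>UNIV-{i}. Li i j)) + (\<Sum>i\<in>UNIV. \<Sum>j\<in>UNIV-{i}. Lj i j)"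
          by (simp add: rowL sum.distrib add.assoc)
        also have "(\<Sum>i\<in>UNIV. \<Sum>j\<in>UNIV-{i}. Lj i j) = (\<Sum>i\<in>UNIV. \<Sum>j\<in>UNIV-{i}. Lj j i)"
          by (rule swap_off)
        finally show ?thesis by (simp add: sum.distrib)
      qed
      have per: "\<And>i. D i + (\<Sum>j\<in>UNIV-{i}. Li i j) + (\<Sum>j\<in>UNIV-{i}. Lj j i)
          \<ge> \<kappa>/4*((z i)^2/(u i+\<eta>)) - \<eta>*\<epsilon>*C*((z i)^2/(u i+\<eta>))"
      proof -
        fix i
        define s where "s = (z i)^2"
        define v where "v = u i + \<eta>"
        have vne: "v \<noteq> 0" using up[of i] e by (simp add: v_def)
        define c1 where "c1 = \<pi> i*s/v^2"
        define c2 where "c2 = \<epsilon>*(u i)^2*s/(2*v^2)"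
        have Li_eq: "\<And>j. Li i j = (- c1) * (a i j * u j) + (-(c1*\<eta> + c2)) * a i j"
          unfolding Li_def c1_def c2_def s_def v_def[symmetric]
          using vne by (simp add: field_simps)
        have X: "(\<Sum>j\<in>UNIV-{i}. Li i j) = - (\<pi> i*s/v^2*(B1 i + \<eta>*Bs i) + \<epsilon>*(u i)^2*s/(2*v^2)*Bs i)"
          unfolding Li_eq sum_lin B1_def[symmetric] Bs_def[symmetric]
          by (simp add: c1_def c2_def B1_def Bs_def algebra_simps)
        define c3 where "c3 = s/(4*v)"
        define c4 where "c4 = \<epsilon>*(u i)^2*s/(2*v^2) + \<epsilon>*\<eta>*s/v"
        have Lj_eq: "\<And>j. Lj j i = (- c3) * (\<pi> j * a j i) + (- c4) * a j i"
          unfolding Lj_def c3_def c4_def s_def v_def[symmetric]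
          using vne by (simp add: field_simps)
        have Y: "(\<Sum>j\<in>UNIV-{i}. Lj j i) = - (s/(4*v)*Pt i + \<epsilon>*(u i)^2*s/(2*v^2)*Bt i + \<epsilon>*\<eta>*s/v*Bt i)"
          unfolding Lj_eq sum_lin Pt_def[symmetric] Bt_def[symmetric]
          by (simp add: c3_def c4_def Pt_def Bt_def algebra_simps)
        have "(\<pi> i/(u i+\<eta>)^2 + \<epsilon>/(u i+\<eta>)) * s * (a0 i + (a i i * u i + B1 i) + \<epsilon>*(\<mu> i/\<pi> i)*(u i)^2 + a i i * u i)
             - (\<pi> i*s/(u i+\<eta>)^2*(B1 i + \<eta>*Bs i) + \<epsilon>*(u i)^2*s/(2*(u i+\<eta>)^2)*Bs i)
             - (s/(4*(u i+\<eta>))*Pt i + \<epsilon>*(u i)^2*s/(2*(u i+\<eta>)^2)*Bt i + \<epsilon>*\<eta>*s/(u i+\<eta>)*Bt i)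
             \<ge> \<kappa>/4*(s/(u i+\<eta>)) - \<eta>*\<epsilon>*C*(s/(u i+\<eta>))"
          by (rule diag_bound[OF pip _ up e eps a0p anz B10 Bs0 Bt0 Pt0 mu kmin et BtC]) (simp add: s_def)
        then show "D i + (\<Sum>j\<in>UNIV-{i}. Li i j) + (\<Sum>j\<in>UNIV-{i}. Lj j i)
          \<ge> \<kappa>/4*((z i)^2/(u i+\<eta>)) - \<eta>*\<epsilon>*C*((z i)^2/(u i+\<eta>))"
          unfolding X Y D_def s_def[symmetric] v_def by simp
      qed
      have S3: "(\<Sum>i\<in>UNIV. D i + (\<Sum>j\<in>UNIV-{i}. Li i j) + (\<Sum>j\<in>UNIV-{i}. Lj j i))
          \<ge> (\<Sum>i\<in>UNIV. \<kappa>/4*((z i)^2/(u i+\<eta>)) - \<eta>*\<epsilon>*C*((z i)^2/(u i+\<eta>)))"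
        by (rule sum_mono) (rule per)
      have S4: "(\<Sum>i\<in>UNIV. \<kappa>/4*((z i)^2/(u i+\<eta>)) - \<eta>*\<epsilon>*C*((z i)^2/(u i+\<eta>)))
          = \<kappa>/4*(\<Sum>i\<in>UNIV. (z i)^2/(u i+\<eta>)) - \<eta>*\<epsilon>*C*(\<Sum>i\<in>UNIV. (z i)^2/(u i+\<eta>))"
        by (simp add: sum_subtractf sum_distrib_left)
      have S5: "\<eta> * \<epsilon>\<^sup>2 * CC2 (\<lambda>i. \<mu> i / \<pi> i) * (\<Sum>i\<in>UNIV. (z i)\<^sup>2) \<ge> 0"
        using e by (simp add: CC2_def sum_nonneg)
      show "quad2 (Heps \<epsilon> \<pi> (\<lambda>i. u i + \<eta>)) (Aeps \<epsilon> a0 a \<mu> \<pi> u) z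
            \<ge> kappa a \<pi> / 4 * (\<Sum>i\<in>UNIV. (z i)\<^sup>2 / (u i + \<eta>))
              - \<eta> * \<epsilon> * CC1 a \<mu> * (\<Sum>i\<in>UNIV. (z i)\<^sup>2 / (u i + \<eta>))
              - \<eta> * \<epsilon>\<^sup>2 * CC2 (\<lambda>i. \<mu> i / \<pi> i) * (\<Sum>i\<in>UNIV. (z i)\<^sup>2)"
        using S1 S2 S3 S4 S5 unfolding \<kappa>_def C_def by linarith
    qed
  qed
qed

end
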